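(* (1) For every $0\le k\le r$, $S^k(0)=(0)\subseteq R_k$. (2) For every $1\le\ell\le r$ and $0\le k\le\ell$, $L^{\ell-k}S^k(0)=J_{\ell,k}(0)\subseteq R_\ell$. (3) For every $1\le\ell\le r$ and $0\le k\le\ell-2$, $S\,L^{\ell-k-1}S^k(0)=L^{\ell-k}S^k(0)$. Here the iterated operators start from the zero ideal of $R_0$.
   Context: Fix a prime $p$ and an integer $r\ge0$. For $0\le k\le r$ let $R_k$ be the commutative ring which is free as a $\mathbb{Z}$-module with basis $X_{k,0},\dots,X_{k,k}$ and multiplication $X_{k,i}X_{k,j}=p^{k-\max(i,j)}X_{k,\min(i,j)}$; thus $X_{k,k}=1$, and an integer $n$ is identified with $nX_{k,k}$. For $0\le k\le\ell\le r$ define: the additive map $\mathrm{ind}^\ell_k:R_k\to R_\ell$, $X_{k,i}\mapsto X_{\ell,i}$; the ring homomorphism $\mathrm{res}^\ell_k:R_\ell\to R_k$, $\mathrm{res}^\ell_k(X_{\ell,i})=p^{\ell-k}X_{k,i}$ if $i\le k$ and $=p^{\ell-i}$ if $i\ge k$; and the multiplicative map $\mathrm{jnd}^\ell_k:R_k\to R_\ell$, $$\mathrm{jnd}^\ell_k\Big(\sum_{i=0}^k m_iX_{k,i}\Big)=m_kX_{\ell,\ell}+\sum_{k\le i<\ell}\frac{m_k^{p^{\ell-i}}-m_k^{p^{\ell-i-1}}}{p^{\ell-i}}X_{\ell,i}+\sum_{0\le i<k}\frac{(\sum_{s=i}^k m_sp^{k-s})^{p^{\ell-k}}-(\sum_{s=i+1}^k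 m_sp^{k-s})^{p^{\ell-k}}}{p^{\ell-i}}X_{\ell,i}$$ ($m_i\in\mathbb{Z}$). For $1\le k\le r$ and an ideal $I\subseteq R_{k-1}$: $L(I)=(\mathrm{res}^k_{k-1})^{-1}(I)\subseteq R_k$, and $S(I)$ is the ideal of $R_k$ generated by $\mathrm{ind}^k_{k-1}(I)\cup\mathrm{jnd}^k_{k-1}(I)$; $L^n,S^n$ are iterates (each step raising the index by one). For $0\le i\le\ell$, $F_{\ell,i}=X_{\ell,i}-p^{\ell-i}$; for $0\le k\le\ell$ and $x\in\mathbb{Z}$, $J_{\ell,k}(x)\subseteq R_\ell$ is the ideal generated by $x,F_{\ell,k},\dots,F_{\ell,\ell-1}$ if $k\le\ell-1$, and $J_{\ell,\ell}(x)=xR_\ell$. *)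

theory Defs
  imports "HOL-Computational_Algebra.Primes"
begin

text \<open>An element of R_k is represented by its coefficient function m :: nat => int
  (coefficient m i of the basis element X_{k,i}); it lies in R_k iff m i = 0 for i > k.\<close>

definition Rk :: "nat \<Rightarrow> (nat \<Rightarrow> int) set" where
  "Rk k = {m. \<forall>i>k. m i = 0}"

definition rzero :: "nat \<Rightarrow> int" where
  "rzero = (\<lambda>_. 0)"

definition radd :: "(nat \<Rightarrow> int) \<Rightarrow> (nat \<Rightarrow> int) \<Rightarrow> (nat \<Rightarrow> int)" where
  "radd a b = (\<lambda>i. a i + b i)"

definition rneg :: "(nat \<Rightarrow> int) \<Rightarrow> (nat \<Rightarrow> int)" where
  "rneg a = (\<lambda>i. - a i)"

definition Xb :: "nat \<Rightarrow> (nat \<Rightarrow> int)" where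
  "Xb i = (\<lambda>t. if t = i then 1 else 0)"

text \<open>the integer n viewed in R_k, i.e. n X_{k,k}\<close>
definition rint :: "nat \<Rightarrow> int \<Rightarrow> (nat \<Rightarrow> int)" where
  "rint k n = (\<lambda>t. if t = k then n else 0)"

text \<open>multiplication in R_k: X_{k,i} X_{k,j} = p^(k - max i j) X_{k, min i j}\<close>
definition rmult :: "nat \<Rightarrow> nat \<Rightarrow> (nat \<Rightarrow> int) \<Rightarrow> (nat \<Rightarrow> int) \<Rightarrow> (nat \<Rightarrow> int)" where
  "rmult p k a b = (\<lambda>t. \<Sum>i\<le>k. \<Sum>j\<le>k.
      if min i j = t then a i * b j * int p ^ (k - max i j) else 0)"

definition is_ideal :: "nat \<Rightarrow> nat \<Rightarrow> (nat \<Rightarrow> int) set \<Rightarrow> bool" where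
  "is_ideal p k I \<longleftrightarrow> I \<subseteq> Rk k \<and> rzero \<in> I \<and>
     (\<forall>a\<in>I. \<forall>b\<in>I. radd a b \<in> I) \<and> (\<forall>a\<in>I. rneg a \<in> I) \<and>
     (\<forall>a\<in>I. \<forall>b\<in>Rk k. rmult p k b a \<in> I)"

definition gen_ideal :: "nat \<Rightarrow> nat \<Rightarrow> (nat \<Rightarrow> int) set \<Rightarrow> (nat \<Rightarrow> int) set" where
  "gen_ideal p k A = \<Inter>{I. is_ideal p k I \<and> A \<subseteq> I}"

text \<open>ind^l_k : X_{k,i} |-> X_{l,i}; on coefficient functions this is the identity\<close>
definition ind :: "nat \<Rightarrow> nat \<Rightarrow> (nat \<Rightarrow> int) \<Rightarrow> (nat \<Rightarrow> int)" where
  "ind l k a = (\<lambda>i. if i \<le> k then a i else 0)"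

definition res :: "nat \<Rightarrow> nat \<Rightarrow> nat \<Rightarrow> (nat \<Rightarrow> int) \<Rightarrow> (nat \<Rightarrow> int)" where
  "res p l k a = (\<lambda>t. if t < k then int p ^ (l - k) * a t
      else if t = k then (\<Sum>i\<in>{k..l}. a i * int p ^ (l - i)) else 0)"

text \<open>jnd^l_k : R_k -> R_l (the divisions are exact; written with div)\<close>
definition jnd :: "nat \<Rightarrow> nat \<Rightarrow> nat \<Rightarrow> (nat \<Rightarrow> int) \<Rightarrow> (nat \<Rightarrow> int)" where
  "jnd p l k m = (\<lambda>i.
     if i = l then m k
     else if k \<le> i \<and> i < l then
       (m k ^ (p ^ (l - i)) - m k ^ (p ^ (l - i - 1))) div (int p ^ (l - i))
     else if i < k then
       ((\<Sum>s\<in>{i..k}. m s * int p ^ (k - s)) ^ (p ^ (l - k))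
        - (\<Sum>s\<in>{i+1..k}. m s * int p ^ (k - s)) ^ (p ^ (l - k))) div (int p ^ (l - i))
     else 0)"

definition Lop :: "nat \<Rightarrow> nat \<Rightarrow> (nat \<Rightarrow> int) set \<Rightarrow> (nat \<Rightarrow> int) set" where
  "Lop p l I = {a \<in> Rk l. res p l (l - 1) a \<in> I}"

definition Sop :: "nat \<Rightarrow> nat \<Rightarrow> (nat \<Rightarrow> int) set \<Rightarrow> (nat \<Rightarrow> int) set" where
  "Sop p l I = gen_ideal p l (ind l (l - 1) ` I \<union> jnd p l (l - 1) ` I)"

fun Siter :: "nat \<Rightarrow> nat \<Rightarrow> (nat \<Rightarrow> int) set" where
  "Siter p 0 = {rzero}"
| "Siter p (Suc k) = Sop p (Suc k) (Siter p k)"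

fun Liter :: "nat \<Rightarrow> nat \<Rightarrow> nat \<Rightarrow> (nat \<Rightarrow> int) set \<Rightarrow> (nat \<Rightarrow> int) set" where
  "Liter p k 0 I = I"
| "Liter p k (Suc n) I = Lop p (k + Suc n) (Liter p k n I)"

definition Fel :: "nat \<Rightarrow> nat \<Rightarrow> nat \<Rightarrow> (nat \<Rightarrow> int)" where
  "Fel p l i = radd (Xb i) (rneg (rint l (int p ^ (l - i))))"

definition Jid :: "nat \<Rightarrow> nat \<Rightarrow> nat \<Rightarrow> int \<Rightarrow> (nat \<Rightarrow> int) set" where
  "Jid p l k x = (if k \<le> l - 1 \<and> k < l
      then gen_ideal p l ({rint l x} \<union> {Fel p l i | i. k \<le> i \<and> i \<le> l - 1})
      else gen_ideal p l {rint l x})"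

end

theory Submission
  imports Defs "HOL-Number_Theory.Number_Theory"
begin

lemma fermat_int:
  assumes "prime p" shows "int p dvd (m::int)^p - m"
proof -
  define n where "n = nat (m mod int p)"
  have p0: "p > 0" using assms prime_gt_0_nat by blast
  have nm: "int n = m mod int p" using p0 by (simp add: n_def)
  have cm: "[int n = m] (mod int p)" using nm by (simp add: cong_def)
  have np: "n < p" using p0 nm by (metis of_nat_less_iff pos_mod_bound of_nat_0_less_iff)
  have "[n ^ p = n] (mod p)"
  proof (cases "n = 0")
    case True then show ?thesis using p0 by (simp add: zero_power)
  next
    case False
    then have "\<not> p dvd n" using np by (meson dvd_imp_le not_gr0 not_le)
    then have "[n ^ (p - 1) = 1] (mod p)" using fermat_theorem assms by blast
    then have "[n ^ (p - 1) * n = 1 * n] (mod p)" by (rule cong_mult) simp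
    moreover have "n ^ (p - 1) * n = n ^ p" using p0
      by (cases p) (simp_all add: mult.commute)
    ultimately show ?thesis by simp
  qed
  then have "[int n ^ p = int n] (mod int p)"
    by (metis cong_int_iff of_nat_power)
  moreover have "[int n ^ p = m ^ p] (mod int p)" using cm by (rule cong_pow)
  ultimately have "[m ^ p = m] (mod int p)" using cm
    by (meson cong_sym cong_trans)
  then show ?thesis by (simp add: cong_iff_dvd_diff)
qed

lemma dvd_pow_diff:
  assumes "prime p" "e \<ge> 1" "int p ^ e dvd x"
  shows "int p ^ (Suc e) dvd (x + y) ^ p - (y::int) ^ p"
proof -
  have eq: "(x + y) ^ p - y ^ p = x * (\<Sum>i<p. y ^ (p - Suc i) * (x + y) ^ i)"
    using power_diff_sumr2[of "x+y" p y] by simp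
  have px: "int p dvd x" using assms(2,3)
    by (meson dvd_power dvd_trans le_numeral_extra(2) less_le_trans order.refl zero_less_one)
  then have cxy: "[x + y = y] (mod int p)"
    by (simp add: cong_iff_dvd_diff)
  have "[(\<Sum>i<p. y ^ (p - Suc i) * (x + y) ^ i) = (\<Sum>i<p. y ^ (p - Suc i) * y ^ i)] (mod int p)"
    by (intro cong_sum cong_mult cong_pow cxy cong_refl)
  moreover have "(\<Sum>i<p. y ^ (p - Suc i) * y ^ i) = int p * y ^ (p - 1)"
  proof -
    have "y ^ (p - Suc i) * y ^ i = y ^ (p - 1)" if "i < p" for i
    proof -
      have "y ^ (p - Suc i) * y ^ i = y ^ (p - Suc i + i)" by (simp add: power_add)
      also have "p - Suc i + i = p - 1" using that by simp
      finally show ?thesis .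
    qed
    then have "(\<Sum>i<p. y ^ (p - Suc i) * y ^ i) = (\<Sum>i<p. y ^ (p - 1))" by simp
    then show ?thesis by simp
  qed
  ultimately have "int p dvd (\<Sum>i<p. y ^ (p - Suc i) * (x + y) ^ i)"
    by (metis cong_dvd_iff dvd_triv_left)
  then have "int p ^ e * int p dvd x * (\<Sum>i<p. y ^ (p - Suc i) * (x + y) ^ i)"
    by (rule mult_dvd_mono[OF assms(3)])
  then show ?thesis using eq by (simp add: mult.commute)
qed

definition eps :: "nat \<Rightarrow> nat \<Rightarrow> (nat \<Rightarrow> int) \<Rightarrow> int" where
  "eps p l a = (\<Sum>i\<le>l. a i * int p ^ (l - i))"
definition phi :: "nat \<Rightarrow> nat \<Rightarrow> nat \<Rightarrow> (nat \<Rightarrow> int) \<Rightarrow> int" where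
  "phi p l j a = (\<Sum>i\<in>{j..l}. a i * int p ^ (l - i))"
definition Kset :: "nat \<Rightarrow> nat \<Rightarrow> nat \<Rightarrow> (nat \<Rightarrow> int) set" where
  "Kset p l k = {a \<in> Rk l. (\<forall>t<k. a t = 0) \<and> eps p l a = 0}"

lemma phi_alt: "phi p l j a = (\<Sum>i\<le>l. if j \<le> i then a i * int p ^ (l - i) else 0)"
proof -
  have "{j..l} = {i \<in> {..l}. j \<le> i}" by auto
  then have "phi p l j a = sum (\<lambda>i. a i * int p ^ (l - i)) {i \<in> {..l}. j \<le> i}"
    unfolding phi_def by simp
  also have "\<dots> = (\<Sum>i\<le>l. if j \<le> i then a i * int p ^ (l - i) else 0)"
    by (rule sum.inter_filter) simp
  finally show ?thesis .
qed

lemma phi_mult: "phi p l j (rmult p l b a) = phi p l j b * phi p l j a"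
proof -
  have "phi p l j (rmult p l b a) = (\<Sum>t\<in>{j..l}. \<Sum>i\<le>l. \<Sum>i'\<le>l.
      if min i i' = t then b i * a i' * int p ^ (l - max i i') * int p ^ (l - t) else 0)"
    unfolding phi_def rmult_def sum_distrib_right by (intro sum.cong refl) simp
  also have "\<dots> = (\<Sum>i\<le>l. \<Sum>i'\<le>l. \<Sum>t\<in>{j..l}.
      if min i i' = t then b i * a i' * int p ^ (l - max i i') * int p ^ (l - t) else 0)"
    by (subst sum.swap) (simp add: sum.swap[of _ "{j..l}"])
  also have "\<dots> = (\<Sum>i\<le>l. \<Sum>i'\<le>l.
      if j \<le> min i i' then b i * a i' * int p ^ (l - max i i') * int p ^ (l - min i i') else 0)"
    by (intro sum.cong refl) (auto simp: sum.delta)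
  also have "\<dots> = (\<Sum>i\<le>l. \<Sum>i'\<le>l. (if j \<le> i then b i * int p ^ (l - i) else 0) *
        (if j \<le> i' then a i' * int p ^ (l - i') else 0))"
    by (intro sum.cong refl) (auto simp: max_def min_def)
  also have "\<dots> = phi p l j b * phi p l j a"
    unfolding phi_alt by (simp add: sum_product)
  finally show ?thesis .
qed

lemma eps_phi0: "eps p l a = phi p l 0 a"
  unfolding eps_def phi_def by (simp add: atLeast0AtMost)

lemma phi_step: "j \<le> l \<Longrightarrow> phi p l j a = a j * int p ^ (l - j) + phi p l (Suc j) a"
  unfolding phi_def by (simp add: sum.atLeast_Suc_atMost)

lemma eps_split: "j \<le> l \<Longrightarrow> eps p l a = (\<Sum>i<j. a i * int p ^ (l - i)) + phi p l j a"
proof (induction j)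
  case 0 then show ?case by (simp add: eps_phi0)
next
  case (Suc j)
  then have "eps p l a = (\<Sum>i<j. a i * int p ^ (l - i)) + phi p l j a" by simp
  also have "\<dots> = (\<Sum>i<Suc j. a i * int p ^ (l - i)) + phi p l (Suc j) a"
    using Suc.prems phi_step[of j l p a] by simp
  finally show ?case .
qed

lemma K_phi:
  assumes "p > 0" "k \<le> l" "a \<in> Rk l"
  shows "a \<in> Kset p l k \<longleftrightarrow> (\<forall>j\<le>k. phi p l j a = 0)"
proof
  assume a: "a \<in> Kset p l k"
  show "\<forall>j\<le>k. phi p l j a = 0"
  proof (intro allI impI)
    fix j assume "j \<le> k"
    then have "(\<Sum>i<j. a i * int p ^ (l - i)) = 0" using a by (simp add: Kset_def)
    then show "phi p l j a = 0" using eps_split[of j l p a] a \<open>j \<le> k\<close> assms(2)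
      by (simp add: Kset_def)
  qed
next
  assume h: "\<forall>j\<le>k. phi p l j a = 0"
  have "\<forall>t<k. a t = 0"
  proof (intro allI impI)
    fix t assume "t < k"
    then have "a t * int p ^ (l - t) = 0" using h phi_step[of t l p a] assms(2) by simp
    then show "a t = 0" using assms(1) by simp
  qed
  moreover have "eps p l a = 0" using h by (simp add: eps_phi0)
  ultimately show "a \<in> Kset p l k" using assms(3) by (simp add: Kset_def)
qed

lemma rmult_Rk: "rmult p l b a \<in> Rk l"
  unfolding Rk_def rmult_def by (auto intro!: sum.neutral)

lemma K_ideal:
  assumes "p > 0" "k \<le> l"
  shows "is_ideal p l (Kset p l k)"
  unfolding is_ideal_def
proof (intro conjI ballI)
  show "Kset p l k \<subseteq> Rk l" by (auto simp: Kset_def)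
  show "rzero \<in> Kset p l k" by (simp add: Kset_def rzero_def Rk_def eps_def)
  fix a assume a: "a \<in> Kset p l k"
  show "rneg a \<in> Kset p l k" using a
    by (simp add: Kset_def rneg_def Rk_def eps_def sum_negf)
  { fix b assume b: "b \<in> Kset p l k"
    show "radd a b \<in> Kset p l k" using a b
      by (simp add: Kset_def radd_def Rk_def eps_def sum.distrib ring_distribs) }
  { fix b assume b: "b \<in> Rk l"
    have aR: "a \<in> Rk l" using a by (simp add: Kset_def)
    have "\<forall>j\<le>k. phi p l j a = 0" using K_phi[OF assms aR] a by simp
    then have "\<forall>j\<le>k. phi p l j (rmult p l b a) = 0" by (simp add: phi_mult)
    then show "rmult p l b a \<in> Kset p l k" using K_phi[OF assms rmult_Rk] by simp }
qed

lemma gen_eq: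
  assumes "is_ideal p l K" "A \<subseteq> K" "\<And>I. is_ideal p l I \<Longrightarrow> A \<subseteq> I \<Longrightarrow> K \<subseteq> I"
  shows "gen_ideal p l A = K"
  using assms unfolding gen_ideal_def by blast

lemma K_base: "Kset p k k = {rzero}"
proof -
  { fix a assume a: "a \<in> Kset p k k"
    have "eps p k a = (\<Sum>i<k. a i * int p ^ (k - i)) + a k"
      unfolding eps_def by (simp add: lessThan_Suc_atMost[symmetric])
    moreover have "(\<Sum>i<k. a i * int p ^ (k - i)) = 0" using a by (simp add: Kset_def)
    ultimately have "a k = 0" using a by (simp add: Kset_def)
    then have "a = rzero" using a unfolding Kset_def Rk_def rzero_def
      by (auto intro!: ext) (metis linorder_neqE_nat) }
  moreover have "rzero \<in> Kset p k k" by (simp add: Kset_def rzero_def Rk_def eps_def)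
  ultimately show ?thesis by blast
qed

lemma res_K:
  assumes "p > 0" "k \<le> l'" "a \<in> Rk (Suc l')"
  shows "res p (Suc l') l' a \<in> Kset p l' k \<longleftrightarrow> a \<in> Kset p (Suc l') k"
proof -
  have R: "res p (Suc l') l' a \<in> Rk l'" by (simp add: Rk_def res_def)
  have C: "(\<forall>t<k. res p (Suc l') l' a t = 0) \<longleftrightarrow> (\<forall>t<k. a t = 0)"
    using assms by (auto simp: res_def)
  have "eps p l' (res p (Suc l') l' a) = (\<Sum>t<l'. int p * a t * int p ^ (l' - t)) + (a l' * int p + a (Suc l'))"
    unfolding eps_def by (simp add: lessThan_Suc_atMost[symmetric] res_def)
  also have "\<dots> = (\<Sum>t<l'. a t * int p ^ (Suc l' - t)) + (a l' * int p + a (Suc l'))"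
    by (intro arg_cong2[where f="(+)"] sum.cong refl) (simp add: Suc_diff_le less_imp_le)
  also have "\<dots> = eps p (Suc l') a"
    unfolding eps_def by (simp add: lessThan_Suc_atMost[symmetric])
  finally show ?thesis using R C assms(3) by (simp add: Kset_def)
qed

lemma ind_rzero: "ind l k rzero = rzero" by (simp add: ind_def rzero_def fun_eq_iff)

lemma jnd_rzero: "p > 0 \<Longrightarrow> jnd p l k rzero = rzero"
  by (simp add: jnd_def rzero_def fun_eq_iff zero_power)

lemma mult_if0: "(if P then x else 0) * (y::int) = (if P then x * y else 0)"
  "y * (if P then x else 0) = (if P then y * x else 0)" by auto

lemma zero_ideal: "is_ideal p l {rzero}"
  unfolding is_ideal_def Rk_def rzero_def radd_def rneg_def rmult_def by (auto cong: if_cong)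

lemma Siter_zero: "p > 0 \<Longrightarrow> Siter p k = {rzero}"
proof (induction k)
  case 0 then show ?case by simp
next
  case (Suc k)
  then have "Siter p (Suc k) = gen_ideal p (Suc k) {rzero}"
    by (simp add: Sop_def ind_rzero jnd_rzero)
  also have "\<dots> = {rzero}"
    by (rule gen_eq[OF zero_ideal]) (auto simp: is_ideal_def)
  finally show ?case .
qed

lemma Liter_K: "p > 0 \<Longrightarrow> Liter p k n (Siter p k) = Kset p (k + n) k"
proof (induction n)
  case 0 then show ?case by (simp add: Siter_zero K_base)
next
  case (Suc n)
  have "Liter p k (Suc n) (Siter p k) = Lop p (Suc (k + n)) (Kset p (k + n) k)"
    using Suc by simp
  also have "\<dots> = Kset p (Suc (k + n)) k"
    unfolding Lop_def using res_K[OF Suc.prems, of k "k+n"]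
    by (auto simp: Kset_def)
  finally show ?case by simp
qed

lemma Fel_val: "Fel p l i t = (if t = i then 1 else 0) - (if t = l then int p ^ (l - i) else 0)"
  by (simp add: Fel_def radd_def rneg_def Xb_def rint_def)

lemma Fel_K: "k \<le> i \<Longrightarrow> i < l \<Longrightarrow> Fel p l i \<in> Kset p l k"
proof -
  assume "k \<le> i" "i < l"
  have "eps p l (Fel p l i) = (\<Sum>t\<le>l. (if t = i then int p ^ (l - t) else 0)) - (\<Sum>t\<le>l. (if t = l then int p ^ (l - i) else 0))"
    unfolding eps_def Fel_val by (simp add: left_diff_distrib sum_subtractf mult_if0)
  also have "\<dots> = 0" using \<open>i < l\<close> by simp
  finally show ?thesis using \<open>k \<le> i\<close> \<open>i < l\<close> by (auto simp: Kset_def Rk_def Fel_val)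
qed

lemma scal: "x \<in> Rk l \<Longrightarrow> rmult p l (rint l c) x = (\<lambda>t. c * x t)"
proof
  fix t assume x: "x \<in> Rk l"
  have "rmult p l (rint l c) x t = (\<Sum>i\<le>l. if i = l then (\<Sum>j\<le>l. if j = t then c * x j else 0) else 0)"
    unfolding rmult_def rint_def
  proof (intro sum.cong refl)
    fix i assume i: "i \<in> {..l}"
    show "(\<Sum>j\<le>l. if min i j = t then (if i = l then c else 0) * x j * int p ^ (l - max i j) else 0) =
      (if i = l then \<Sum>j\<le>l. if j = t then c * x j else 0 else 0)"
    proof (cases "i = l")
      case True
      have "(\<Sum>j\<le>l. if min l j = t then c * x j * int p ^ (l - max l j) else 0) = (\<Sum>j\<le>l. if j = t then c * x j else 0)"
        by (intro sum.cong refl) (auto simp: min_def max_def)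
      with True show ?thesis by simp
    next
      case False then show ?thesis by (simp cong: if_cong)
    qed
  qed
  also have "\<dots> = c * x t" using x by (auto simp: Rk_def)
  finally show "rmult p l (rint l c) x t = c * x t" .
qed

lemma rint_Rk: "rint l c \<in> Rk l" by (simp add: rint_def Rk_def)

lemma ideal_scal: "is_ideal p l I \<Longrightarrow> x \<in> I \<Longrightarrow> (\<lambda>t. c * x t) \<in> I"
proof -
  assume I: "is_ideal p l I" "x \<in> I"
  then have "rmult p l (rint l c) x \<in> I" using rint_Rk unfolding is_ideal_def by blast
  moreover have "x \<in> Rk l" using I unfolding is_ideal_def by blast
  ultimately show ?thesis by (simp add: scal)
qed

lemma ideal_sum:
  assumes "is_ideal p l I" "finite S" "\<forall>i\<in>S. f i \<in> I"
  shows "(\<lambda>t. \<Sum>i\<in>S. f i t) \<in> I"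
  using assms(2,3)
proof (induction S rule: finite_induct)
  case empty then show ?case using assms(1) by (simp add: is_ideal_def rzero_def)
next
  case (insert x F)
  then have "radd (f x) (\<lambda>t. \<Sum>i\<in>F. f i t) \<in> I" using assms(1) by (simp add: is_ideal_def)
  then show ?case using insert by (simp add: radd_def)
qed

lemma K_sub:
  assumes "is_ideal p l I" "k \<le> l" "\<And>i. k \<le> i \<Longrightarrow> i < l \<Longrightarrow> Fel p l i \<in> I"
  shows "Kset p l k \<subseteq> I"
proof
  fix a assume a: "a \<in> Kset p l k"
  have eq: "a = (\<lambda>t. \<Sum>i\<in>{k..<l}. a i * Fel p l i t)"
  proof
    fix t
    have "(\<Sum>i\<in>{k..<l}. a i * Fel p l i t) =
        (\<Sum>i\<in>{k..<l}. if t = i then a i else 0) - (if t = l then (\<Sum>i\<in>{k..<l}. a i * int p ^ (l - i)) else 0)"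
      unfolding Fel_val by (simp add: right_diff_distrib sum_subtractf mult_if0 sum_negf)
    also have "\<dots> = (if t \<in> {k..<l} then a t else 0) - (if t = l then (\<Sum>i\<in>{k..<l}. a i * int p ^ (l - i)) else 0)"
      by simp
    also have "\<dots> = a t"
    proof -
      have e: "eps p l a = (\<Sum>i<l. a i * int p ^ (l - i)) + a l"
        unfolding eps_def by (simp add: lessThan_Suc_atMost[symmetric])
      have "(\<Sum>i<l. a i * int p ^ (l - i)) = (\<Sum>i\<in>{0..<k}. a i * int p ^ (l - i)) + (\<Sum>i\<in>{k..<l}. a i * int p ^ (l - i))"
        using assms(2) by (simp add: atLeast0LessThan[symmetric] sum.atLeastLessThan_concat)
      moreover have "(\<Sum>i\<in>{0..<k}. a i * int p ^ (l - i)) = 0" using a by (simp add: Kset_def)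
      ultimately have "a l = - (\<Sum>i\<in>{k..<l}. a i * int p ^ (l - i))" using e a by (simp add: Kset_def)
      then show ?thesis using a by (auto simp: Kset_def Rk_def)
    qed
    finally show "a t = (\<Sum>i\<in>{k..<l}. a i * Fel p l i t)" by simp
  qed
  have "(\<lambda>t. \<Sum>i\<in>{k..<l}. a i * Fel p l i t) \<in> I"
    using assms by (intro ideal_sum) (auto intro: ideal_scal[OF assms(1) assms(3)])
  then show "a \<in> I" using eq by simp
qed

lemma Jid_K:
  assumes "p > 0" "k \<le> l"
  shows "Jid p l k 0 = Kset p l k"
proof (cases "k = l")
  case True
  have "rint l 0 = rzero" by (simp add: rint_def rzero_def fun_eq_iff)
  then have "Jid p l k 0 = gen_ideal p l {rzero}" using True by (simp add: Jid_def)
  also have "\<dots> = {rzero}" by (rule gen_eq[OF zero_ideal]) (auto simp: is_ideal_def)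
  finally show ?thesis using True K_base by simp
next
  case False
  then have kl: "k < l" using assms by simp
  have "rint l 0 = rzero" by (simp add: rint_def rzero_def fun_eq_iff)
  then have "Jid p l k 0 = gen_ideal p l ({rzero} \<union> {Fel p l i | i. k \<le> i \<and> i \<le> l - 1})"
    using kl by (simp add: Jid_def)
  also have "\<dots> = Kset p l k"
  proof (rule gen_eq[OF K_ideal[OF assms]])
    show "{rzero} \<union> {Fel p l i |i. k \<le> i \<and> i \<le> l - 1} \<subseteq> Kset p l k"
      using K_ideal[OF assms] Fel_K kl by (auto simp: is_ideal_def)
    fix I assume I: "is_ideal p l I" "{rzero} \<union> {Fel p l i |i. k \<le> i \<and> i \<le> l - 1} \<subseteq> I"
    show "Kset p l k \<subseteq> I"
    proof (rule K_sub[OF I(1) assms(2)])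
      fix i assume "k \<le> i" "i < l"
      then have "Fel p l i \<in> {Fel p l i |i. k \<le> i \<and> i \<le> l - 1}" by auto
      then show "Fel p l i \<in> I" using I(2) by blast
    qed
  qed
  finally show ?thesis .
qed

lemma ind_id: "x \<in> Rk l' \<Longrightarrow> ind (Suc l') l' x = x"
  by (auto simp: ind_def Rk_def fun_eq_iff)

lemma ind_K: assumes "a \<in> Kset p l' k" shows "ind (Suc l') l' a \<in> Kset p (Suc l') k"
proof -
  have aR: "a \<in> Rk l'" using assms by (simp add: Kset_def)
  then have aR': "a \<in> Rk (Suc l')" by (simp add: Rk_def)
  have "eps p (Suc l') a = (\<Sum>i\<le>l'. a i * int p ^ (l' - i) * int p) + a (Suc l')"
    unfolding eps_def
    by (simp add: Suc_diff_le mult.assoc mult.commute[of "int p"])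
  also have "\<dots> = eps p l' a * int p" using aR by (simp add: eps_def sum_distrib_right Rk_def)
  finally show ?thesis using assms aR' ind_id[OF aR] by (simp add: Kset_def)
qed

lemma jnd_top: "jnd p (Suc l') l' m (Suc l') = m l'" by (simp add: jnd_def)
lemma jnd_l: "jnd p (Suc l') l' m l' = (m l' ^ p - m l') div int p" by (simp add: jnd_def)
lemma jnd_lt: "i < l' \<Longrightarrow> jnd p (Suc l') l' m i =
   ((\<Sum>s\<in>{i..l'}. m s * int p ^ (l' - s)) ^ p - (\<Sum>s\<in>{Suc i..l'}. m s * int p ^ (l' - s)) ^ p) div int p ^ (Suc l' - i)"
  by (simp add: jnd_def)
lemma jnd_gt: "i > Suc l' \<Longrightarrow> jnd p (Suc l') l' m i = 0" by (simp add: jnd_def)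

lemma jnd_K:
  assumes pr: "prime p" and kl: "k < l'" and m: "m \<in> Kset p l' k"
  shows "jnd p (Suc l') l' m \<in> Kset p (Suc l') k"
proof -
  have p0: "p > 0" using pr prime_gt_0_nat by blast
  define A where "A i = (\<Sum>s\<in>{i..l'}. m s * int p ^ (l' - s))" for i
  let ?j = "jnd p (Suc l') l' m"
  have J1: "?j (Suc l') = m l'" by (simp add: jnd_def)
  have J2: "?j l' = (m l' ^ p - m l') div int p" by (simp add: jnd_def)
  have J3: "?j i = (A i ^ p - A (Suc i) ^ p) div int p ^ (Suc l' - i)" if "i < l'" for i
    using that by (simp add: jnd_def A_def)
  have Astep: "A i = m i * int p ^ (l' - i) + A (Suc i)" if "i \<le> l'" for i
    using that by (simp add: A_def sum.atLeast_Suc_atMost)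
  have Al: "A l' = m l'" by (simp add: A_def)
  have A0: "A 0 = 0" using m by (simp add: A_def Kset_def eps_def atLeast0AtMost)
  have Ak: "i \<le> k \<Longrightarrow> A i = 0" for i
  proof (induction i)
    case 0 show ?case by (rule A0)
  next
    case (Suc i)
    then have "A i = m i * int p ^ (l' - i) + A (Suc i)" "m i = 0" "A i = 0"
      using Astep[of i] kl m by (auto simp: Kset_def)
    then show ?case by simp
  qed
  have dvdA: "int p ^ (Suc l' - i) dvd A i ^ p - A (Suc i) ^ p" if "i < l'" for i
  proof -
    have "int p ^ (Suc (l' - i)) dvd (m i * int p ^ (l' - i) + A (Suc i)) ^ p - A (Suc i) ^ p"
      using that by (intro dvd_pow_diff pr) auto
    then show ?thesis using Astep[of i] that by (simp add: Suc_diff_le)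
  qed
  have dvdF: "int p dvd m l' ^ p - m l'" by (rule fermat_int[OF pr])
  have R: "?j \<in> Rk (Suc l')" by (simp add: Rk_def jnd_def)
  have C: "\<forall>t<k. ?j t = 0"
  proof (intro allI impI)
    fix t assume "t < k"
    then show "?j t = 0" using J3[of t] Ak[of t] Ak[of "Suc t"] kl p0 by (simp add: zero_power)
  qed
  have "eps p (Suc l') ?j = (\<Sum>i<l'. ?j i * int p ^ (Suc l' - i)) + ?j l' * int p + ?j (Suc l')"
    unfolding eps_def by (simp add: lessThan_Suc_atMost[symmetric])
  also have "(\<Sum>i<l'. ?j i * int p ^ (Suc l' - i)) = (\<Sum>i<l'. A i ^ p - A (Suc i) ^ p)"
    by (intro sum.cong refl) (simp add: J3 dvdA)
  also have "\<dots> = A 0 ^ p - A l' ^ p" by (rule sum_lessThan_telescope')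
  also have "?j l' * int p = m l' ^ p - m l'" using J2 dvdF by simp
  finally have "eps p (Suc l') ?j = 0" using A0 Al J1 p0 by (simp add: zero_power)
  then show ?thesis using R C by (simp add: Kset_def)
qed

definition m0 :: "nat \<Rightarrow> nat \<Rightarrow> (nat \<Rightarrow> int)" where
  "m0 p l' = (\<lambda>t. (if t = l' then int p else 0) - (if t = l' - 1 then 1 else 0))"

lemma Am:
  assumes l1: "l' \<ge> 1"
  shows "(\<Sum>s\<in>{i..l'}. m0 p l' s * int p ^ (l' - s)) = (if i \<le> l' - 1 then 0 else if i = l' then int p else 0)"
proof -
  have "(\<Sum>s\<in>{i..l'}. m0 p l' s * int p ^ (l' - s)) =
      (\<Sum>s\<in>{i..l'}. if s = l' then int p * int p ^ (l' - s) else 0) - (\<Sum>s\<in>{i..l'}. if s = l' - 1 then int p ^ (l' - s) else 0)"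
    unfolding m0_def by (simp add: left_diff_distrib sum_subtractf mult_if0)
  also have "\<dots> = (if i \<le> l' then int p else 0) - (if i \<le> l' - 1 then int p else 0)"
  proof -
    have "l' - (l' - 1) = 1" using l1 by simp
    then show ?thesis using l1 by simp
  qed
  also have "\<dots> = (if i \<le> l' - 1 then 0 else if i = l' then int p else 0)" by auto
  finally show ?thesis .
qed

lemma m0K: assumes "Suc k \<le> l'" shows "m0 p l' \<in> Kset p l' k"
proof -
  have l1: "l' \<ge> 1" using assms by simp
  have R: "m0 p l' \<in> Rk l'" by (auto simp: m0_def Rk_def)
  have "eps p l' (m0 p l') = 0" using Am[OF l1, of p 0] by (simp add: eps_def atLeast0AtMost)
  moreover have "\<forall>t<k. m0 p l' t = 0" using assms by (auto simp: m0_def)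
  ultimately show ?thesis using R by (simp add: Kset_def)
qed

lemma jv:
  assumes pr: "prime p" and l1: "l' \<ge> 1"
  shows "jnd p (Suc l') l' (m0 p l') t = (if t = Suc l' then int p else if t = l' then int p ^ (p - 1) - 1
        else if t = l' - 1 then - (int p ^ (p - 2)) else 0)"
proof -
  have p0: "p > 0" using pr prime_gt_0_nat by blast
  have p2: "p \<ge> 2" using pr prime_ge_2_nat by blast
  have pp1: "int p ^ p = int p * int p ^ (p - 1)" using p0 by (cases p) auto
  have pp2: "int p ^ p = int p ^ 2 * int p ^ (p - 2)"
  proof -
    have "int p ^ p = int p ^ (2 + (p - 2))" using p2 by (simp only: le_add_diff_inverse)
    also have "\<dots> = int p ^ 2 * int p ^ (p - 2)" by (rule power_add)
    finally show ?thesis .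
  qed
  consider "t = Suc l'" | "t = l'" | "t = l' - 1" | "t < l' - 1" | "t > Suc l'" by linarith
  then show ?thesis
  proof cases
    case 1 then show ?thesis using l1 by (simp add: jnd_top m0_def)
  next
    case 2
    have "(int p ^ p - int p) = int p * (int p ^ (p - 1) - 1)" using pp1 by (simp add: algebra_simps)
    then have "(int p ^ p - int p) div int p = int p ^ (p - 1) - 1" using p0 by simp
    moreover have "m0 p l' l' = int p" using l1 by (simp add: m0_def)
    ultimately show ?thesis using 2 l1 by (simp add: jnd_l)
  next
    case 3
    have e: "Suc l' - (l' - 1) = 2" "Suc (l' - 1) = l'" using l1 by auto
    have z: "(0 - int p ^ p) = int p ^ 2 * (- (int p ^ (p - 2)))" using pp2 by simp
    have "(0 - int p ^ p) div int p ^ 2 = - (int p ^ (p - 2))"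
      by (subst z, rule nonzero_mult_div_cancel_left) (use p0 in simp)
    moreover have "jnd p (Suc l') l' (m0 p l') t = (0 ^ p - int p ^ p) div int p ^ 2"
      using 3 l1 Am[OF l1, of p "l' - 1"] Am[OF l1, of p l'] jnd_lt[of t l' p "m0 p l'"] by (simp add: e)
    ultimately show ?thesis using 3 l1 p0 by (auto simp: zero_power)
  next
    case 4
    then show ?thesis using Am[OF l1, of p t] Am[OF l1, of p "Suc t"] p0 jnd_lt[of t l' p "m0 p l'"]
      by (auto simp: zero_power)
  next
    case 5 then show ?thesis by (simp add: jnd_gt)
  qed
qed

lemma Ftop_eq:
  assumes pr: "prime p" and l1: "l' \<ge> 1"
  shows "Fel p (Suc l') l' = radd (\<lambda>t. int p ^ (p - 2) * m0 p l' t) (rneg (jnd p (Suc l') l' (m0 p l')))"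
proof
  fix t
  have p2: "p \<ge> 2" using pr prime_ge_2_nat by blast
  have "p - 1 = Suc (p - 2)" using p2 by simp
  then have pp: "int p ^ (p - 2) * int p = int p ^ (p - 1)" by (simp add: power_Suc2)
  consider "t = Suc l'" | "t = l'" | "t = l' - 1" | "t \<noteq> Suc l' \<and> t \<noteq> l' \<and> t \<noteq> l' - 1" by blast
  then show "Fel p (Suc l') l' t = radd (\<lambda>t. int p ^ (p - 2) * m0 p l' t) (rneg (jnd p (Suc l') l' (m0 p l'))) t"
  proof cases
    case 1 then show ?thesis using l1 using jv[OF pr l1, of t] by (simp add: Fel_val radd_def rneg_def m0_def)
  next
    case 2 then show ?thesis using l1 pp using jv[OF pr l1, of t] by (simp add: Fel_val radd_def rneg_def m0_def)
  next
    case 3 then show ?thesis using l1 using jv[OF pr l1, of t] by (auto simp: Fel_val radd_def rneg_def m0_def)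
  next
    case 4 then show ?thesis using l1 using jv[OF pr l1, of t] by (simp add: Fel_val radd_def rneg_def m0_def)
  qed
qed

lemma Fi_eq:
  assumes il: "i < l'"
  shows "Fel p (Suc l') i = radd (Fel p l' i) (\<lambda>t. int p ^ (l' - i) * Fel p (Suc l') l' t)"
proof
  fix t
  have pe: "int p ^ (l' - i) * int p = int p ^ (Suc l' - i)" using il by (simp add: Suc_diff_le)
  consider "t = i" | "t = l'" | "t = Suc l'" | "t \<noteq> i \<and> t \<noteq> l' \<and> t \<noteq> Suc l'" by blast
  then show "Fel p (Suc l') i t = radd (Fel p l' i) (\<lambda>t. int p ^ (l' - i) * Fel p (Suc l') l' t) t"
  proof cases
    case 1 then show ?thesis using il by (simp add: Fel_val radd_def)
  next
    case 2 then show ?thesis using il by (simp add: Fel_val radd_def)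
  next
    case 3 then show ?thesis using il pe by (simp add: Fel_val radd_def)
  next
    case 4 then show ?thesis by (simp add: Fel_val radd_def)
  qed
qed

lemma Sop_K:
  assumes pr: "prime p" and k2: "Suc k \<le> l'"
  shows "Sop p (Suc l') (Kset p l' k) = Kset p (Suc l') k"
proof -
  have p0: "p > 0" using pr prime_gt_0_nat by blast
  have l1: "l' \<ge> 1" using k2 by simp
  have KI: "is_ideal p (Suc l') (Kset p (Suc l') k)" using K_ideal[OF p0] k2 by simp
  let ?G = "ind (Suc l') l' ` Kset p l' k \<union> jnd p (Suc l') l' ` Kset p l' k"
  have "Sop p (Suc l') (Kset p l' k) = gen_ideal p (Suc l') ?G" by (simp add: Sop_def)
  also have "\<dots> = Kset p (Suc l') k"
  proof (rule gen_eq[OF KI])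
    have "ind (Suc l') l' ` Kset p l' k \<subseteq> Kset p (Suc l') k" using ind_K by blast
    moreover have "jnd p (Suc l') l' ` Kset p l' k \<subseteq> Kset p (Suc l') k"
      using jnd_K[OF pr] k2 by (metis Suc_le_lessD image_subsetI)
    ultimately show "?G \<subseteq> Kset p (Suc l') k" by blast
    fix I assume I: "is_ideal p (Suc l') I" "?G \<subseteq> I"
    have mK: "m0 p l' \<in> Kset p l' k" by (rule m0K[OF k2])
    have mR: "m0 p l' \<in> Rk l'" using mK by (simp add: Kset_def)
    have "ind (Suc l') l' (m0 p l') \<in> ?G" using mK by blast
    then have m0I: "m0 p l' \<in> I" using I(2) ind_id[OF mR] by auto
    have jI: "jnd p (Suc l') l' (m0 p l') \<in> I" using I(2) mK by blast
    have Fl: "Fel p (Suc l') l' \<in> I"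
    proof -
      have "radd (\<lambda>t. int p ^ (p - 2) * m0 p l' t) (rneg (jnd p (Suc l') l' (m0 p l'))) \<in> I"
        using I(1) ideal_scal[OF I(1) m0I] jI unfolding is_ideal_def by blast
      then show ?thesis using Ftop_eq[OF pr l1] by simp
    qed
    show "Kset p (Suc l') k \<subseteq> I"
    proof (rule K_sub[OF I(1)])
      show "k \<le> Suc l'" using k2 by simp
      fix i assume i: "k \<le> i" "i < Suc l'"
      show "Fel p (Suc l') i \<in> I"
      proof (cases "i = l'")
        case True then show ?thesis using Fl by simp
      next
        case False
        then have il: "i < l'" using i by simp
        have GK: "Fel p l' i \<in> Kset p l' k" using Fel_K i il by blast
        then have GR: "Fel p l' i \<in> Rk l'" by (simp add: Kset_def)
        have "ind (Suc l') l' (Fel p l' i) \<in> ?G" using GK by blast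
        then have GI: "Fel p l' i \<in> I" using I(2) ind_id[OF GR] by auto
        have "radd (Fel p l' i) (\<lambda>t. int p ^ (l' - i) * Fel p (Suc l') l' t) \<in> I"
          using I(1) GI ideal_scal[OF I(1) Fl] unfolding is_ideal_def by blast
        then show ?thesis using Fi_eq[OF il] by simp
      qed
    qed
  qed
  finally show ?thesis .
qed

theorem proposition6:
  fixes p r :: nat
  assumes "prime p"
  shows "(\<forall>k\<le>r. Siter p k = {rzero})
       \<and> (\<forall>l k. 1 \<le> l \<and> l \<le> r \<and> k \<le> l \<longrightarrow> Liter p k (l - k) (Siter p k) = Jid p l k 0)
       \<and> (\<forall>l k. 1 \<le> l \<and> l \<le> r \<and> k + 2 \<le> l \<longrightarrow>
            Sop p l (Liter p k (l - k - 1) (Siter p k)) = Liter p k (l - k) (Siter p k))"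
proof (intro conjI allI impI)
  have p0: "p > 0" using assms prime_gt_0_nat by blast
  fix k assume "k \<le> r"
  show "Siter p k = {rzero}" using Siter_zero[OF p0] .
next
  have p0: "p > 0" using assms prime_gt_0_nat by blast
  fix l k assume h: "1 \<le> l \<and> l \<le> r \<and> k \<le> l"
  show "Liter p k (l - k) (Siter p k) = Jid p l k 0"
    using Liter_K[OF p0, of k "l - k"] Jid_K[OF p0, of k l] h by simp
next
  have p0: "p > 0" using assms prime_gt_0_nat by blast
  fix l k assume h: "1 \<le> l \<and> l \<le> r \<and> k + 2 \<le> l"
  then obtain l' where l: "l = Suc l'" by (cases l) auto
  have a: "Liter p k (l - k - 1) (Siter p k) = Kset p l' k"
    using Liter_K[OF p0, of k "l - k - 1"] h l by simp
  have b: "Liter p k (l - k) (Siter p k) = Kset p l k"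
    using Liter_K[OF p0, of k "l - k"] h by simp
  show "Sop p l (Liter p k (l - k - 1) (Siter p k)) = Liter p k (l - k) (Siter p k)"
    using Sop_K[OF assms, of k l'] a b h l by simp
qed

end
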